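(* Let $G$ be a pseudoforest and let $\tau=\tau_A$, $A=\binom{a\ b}{c\ d}$, be a nontrivial 2-switch on $G$. Suppose that either (i) $ab\in E(\operatorname{Forest}(G))$ and $cd\in E(\operatorname{Cycles}(G))$, or (ii) $ab,cd\in E(\operatorname{Cycles}(G))$. Then $\tau$ is a p-switch over $G$.
   Context: Graphs are finite, simple, undirected, labeled. A unicyclic graph is a connected graph with exactly one cycle; a pseudoforest is a graph each of whose components is a tree or a unicyclic graph. For vertices $a,b,c,d$, $A=\binom{a\ b}{c\ d}$ is interchangeable in $G$ if $ab,cd\in E(G)$, $\{a,b\}\cap\{c,d\}=\varnothing$, $ac,bd\notin E(G)$; the 2-switch $\tau_A$ sends $G$ to $G-ab-cd+ac+bd$ if $A$ is interchangeable and to $G$ otherwise (trivial). A nontrivial 2-switch $\tau$ over a pseudoforest $G$ is a p-switch if $\tau(G)$ is a pseudoforest. $\operatorname{Cycles}(H)$ is the subgraph induced by vertices lying on some cycle of $H$; $\operatorname{Forest}(H)=H-E(\operatorname{Cycles}(H))$. *)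

theory Defs
  imports Main
begin

type_synonym 'a graph = "'a set \<times> 'a set set"

definition verts :: "'a graph \<Rightarrow> 'a set" where "verts G = fst G"
definition edges :: "'a graph \<Rightarrow> 'a set set" where "edges G = snd G"

definition simple_graph :: "'a graph \<Rightarrow> bool" where
  "simple_graph G \<longleftrightarrow> finite (verts G) \<and>
     (\<forall>e\<in>edges G. card e = 2 \<and> e \<subseteq> verts G)"

definition adj :: "'a graph \<Rightarrow> 'a \<Rightarrow> 'a \<Rightarrow> bool" where
  "adj G u v \<longleftrightarrow> {u, v} \<in> edges G"

definition reachable :: "'a graph \<Rightarrow> 'a \<Rightarrow> 'a \<Rightarrow> bool" where
  "reachable G u v \<longleftrightarrow> u \<in> verts G \<and> (adj G)\<^sup>*\<^sup>* u v"

definition connected_graph :: "'a graph \<Rightarrow> bool" where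
  "connected_graph G \<longleftrightarrow> verts G \<noteq> {} \<and>
     (\<forall>u\<in>verts G. \<forall>v\<in>verts G. reachable G u v)"

definition induced :: "'a graph \<Rightarrow> 'a set \<Rightarrow> 'a graph" where
  "induced G S = (S, {e\<in>edges G. e \<subseteq> S})"

definition component :: "'a graph \<Rightarrow> 'a \<Rightarrow> 'a graph" where
  "component G v = induced G {u. reachable G v u}"

text \<open>A cycle is given by a list of at least 3 distinct vertices, consecutive ones
(cyclically) adjacent.  As a subgraph it is determined by its edge set.\<close>
definition is_cycle :: "'a graph \<Rightarrow> 'a list \<Rightarrow> bool" where
  "is_cycle G vs \<longleftrightarrow> length vs \<ge> 3 \<and> distinct vs \<and> set vs \<subseteq> verts G \<and>
     (\<forall>i<length vs. adj G (vs ! i) (vs ! ((i + 1) mod length vs)))"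

definition cycle_edges :: "'a list \<Rightarrow> 'a set set" where
  "cycle_edges vs = {{vs ! i, vs ! ((i + 1) mod length vs)} | i. i < length vs}"

definition cycles_of :: "'a graph \<Rightarrow> 'a set set set" where
  "cycles_of G = {cycle_edges vs | vs. is_cycle G vs}"

definition is_tree :: "'a graph \<Rightarrow> bool" where
  "is_tree G \<longleftrightarrow> connected_graph G \<and> cycles_of G = {}"

definition unicyclic :: "'a graph \<Rightarrow> bool" where
  "unicyclic G \<longleftrightarrow> connected_graph G \<and> card (cycles_of G) = 1"

definition pseudoforest :: "'a graph \<Rightarrow> bool" where
  "pseudoforest G \<longleftrightarrow> simple_graph G \<and>
     (\<forall>v\<in>verts G. is_tree (component G v) \<or> unicyclic (component G v))"

definition Cycles :: "'a graph \<Rightarrow> 'a graph" where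
  "Cycles H = induced H {v. \<exists>vs. is_cycle H vs \<and> v \<in> set vs}"

definition Forest :: "'a graph \<Rightarrow> 'a graph" where
  "Forest H = (verts H, edges H - edges (Cycles H))"

definition interchangeable :: "'a graph \<Rightarrow> 'a \<Rightarrow> 'a \<Rightarrow> 'a \<Rightarrow> 'a \<Rightarrow> bool" where
  "interchangeable G a b c d \<longleftrightarrow> {a, b} \<in> edges G \<and> {c, d} \<in> edges G \<and>
     {a, b} \<inter> {c, d} = {} \<and> {a, c} \<notin> edges G \<and> {b, d} \<notin> edges G"

definition two_switch :: "'a \<Rightarrow> 'a \<Rightarrow> 'a \<Rightarrow> 'a \<Rightarrow> 'a graph \<Rightarrow> 'a graph" where
  "two_switch a b c d G =
     (if interchangeable G a b c d
      then (verts G, (edges G - {{a, b}, {c, d}}) \<union> {{a, c}, {b, d}})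
      else G)"

definition p_switch :: "'a graph \<Rightarrow> 'a \<Rightarrow> 'a \<Rightarrow> 'a \<Rightarrow> 'a \<Rightarrow> bool" where
  "p_switch G a b c d \<longleftrightarrow> pseudoforest G \<and> interchangeable G a b c d \<and>
     pseudoforest (two_switch a b c d G)"

end

theory Submission
  imports Defs "HOL-Library.Transitive_Closure_Table"
begin


definition rch :: "'a set set \<Rightarrow> 'a \<Rightarrow> 'a \<Rightarrow> bool" where
  "rch F = (\<lambda>x y. {x,y} \<in> F)\<^sup>*\<^sup>*"

lemma rch_refl[simp]: "rch F x x" by (simp add: rch_def)
lemma rch_edge: "{x,y} \<in> F \<Longrightarrow> rch F x y"
  unfolding rch_def by (rule r_into_rtranclp) simp
lemma rch_trans: "rch F x y \<Longrightarrow> rch F y z \<Longrightarrow> rch F x z"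
  unfolding rch_def by (rule rtranclp_trans)
lemma rch_sym: "rch F x y \<Longrightarrow> rch F y x"
  unfolding rch_def
proof (induction rule: rtranclp_induct)
  case base then show ?case by simp
next
  case (step y z)
  then have "(\<lambda>x y. {x,y} \<in> F) z y" by (simp add: insert_commute)
  then show ?case using step(3) by (rule converse_rtranclp_into_rtranclp)
qed
lemma rch_mono: "F \<subseteq> F' \<Longrightarrow> rch F x y \<Longrightarrow> rch F' x y"
  unfolding rch_def by (erule rtranclp_mono[THEN predicate2D, rotated]) auto

lemma rch_insert:
  assumes "rch (insert {x,y} F) s t"
  shows "rch F s t \<or> (rch F s x \<and> rch F y t) \<or> (rch F s y \<and> rch F x t)"
  using assms unfolding rch_def
proof (induction rule: rtranclp_induct)
  case base then show ?case by simp
next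
  case (step u w)
  show ?case
  proof (cases "{u,w} \<in> F")
    case True
    then show ?thesis using step(3)
      by (meson rtranclp.rtrancl_into_rtrancl)
  next
    case False
    then have "(u = x \<and> w = y) \<or> (u = y \<and> w = x)" using step(2) by (auto simp: doubleton_eq_iff)
    then show ?thesis using step(3) by auto
  qed
qed

lemma rch_repl: "rch F x y \<Longrightarrow> rch (insert {x,y} F) s t \<Longrightarrow> rch F s t"
  by (meson rch_insert rch_sym rch_trans)

definition cyc :: "'a set set \<Rightarrow> 'a \<Rightarrow> 'a \<Rightarrow> bool" where
  "cyc F s t \<longleftrightarrow> s \<noteq> t \<and> {s,t} \<in> F \<and> rch (F - {{s,t}}) s t"
definition acyc :: "'a set set \<Rightarrow> 'a \<Rightarrow> bool" where
  "acyc F x \<longleftrightarrow> (\<forall>s t. rch F x s \<longrightarrow> \<not> cyc F s t)"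
definition PF :: "'a set set \<Rightarrow> bool" where
  "PF F \<longleftrightarrow> (\<forall>s t p q. cyc F s t \<longrightarrow> cyc (F - {{s,t}}) p q \<longrightarrow> \<not> rch F s p)"

lemma cyc_sym: "cyc F s t \<Longrightarrow> cyc F t s"
  unfolding cyc_def by (auto simp: insert_commute intro: rch_sym)
lemma cyc_mono: "F \<subseteq> F' \<Longrightarrow> cyc F s t \<Longrightarrow> cyc F' s t"
  unfolding cyc_def by (auto intro: rch_mono[of "F - {{s,t}}" "F' - {{s,t}}"])
lemma acyc_mono: "F' \<subseteq> F \<Longrightarrow> acyc F x \<Longrightarrow> acyc F' x"
  unfolding acyc_def by (meson cyc_mono rch_mono)
lemma acyc_rch: "acyc F x \<Longrightarrow> rch F x y \<Longrightarrow> acyc F y"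
  unfolding acyc_def by (meson rch_trans)
lemma PF_del: "PF F \<Longrightarrow> PF (F - {e})"
  unfolding PF_def
  by (meson Diff_mono Diff_subset cyc_mono order_refl rch_mono)
lemma PF_acyc: "PF F \<Longrightarrow> cyc F s t \<Longrightarrow> acyc (F - {{s,t}}) s"
  unfolding PF_def acyc_def by (meson Diff_subset rch_mono)

lemma cyc_swap:
  assumes "cyc F s t" "cyc (F - {{s,t}}) p q"
  shows "cyc F p q \<and> cyc (F - {{p,q}}) s t"
proof -
  let ?F0 = "F - {{s,t}} - {{p,q}}"
  have pq: "{p,q} \<in> F - {{s,t}}" "p \<noteq> q" and r0: "rch ?F0 p q" using assms(2) by (auto simp: cyc_def)
  have ins: "F - {{s,t}} = insert {p,q} ?F0" using pq by auto
  have "rch (F - {{s,t}}) s t" "s \<noteq> t" "{s,t} \<in> F" using assms(1) by (auto simp: cyc_def)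
  then have r1: "rch ?F0 s t" using rch_repl[OF r0] ins by metis
  have e: "F - {{p,q}} - {{s,t}} = ?F0" by auto
  show ?thesis unfolding cyc_def using pq r0 r1 \<open>s \<noteq> t\<close> \<open>{s,t} \<in> F\<close> e
    by (auto intro: rch_mono[of ?F0])
qed

lemma join:
  assumes "acyc F x" "acyc F y" "\<not> rch F x y"
  shows "acyc (insert {x,y} F) x"
  unfolding acyc_def
proof (intro allI impI notI)
  fix s t assume r: "rch (insert {x,y} F) x s" and c: "cyc (insert {x,y} F) s t"
  show False
  proof (cases "{s,t} = {x,y}")
    case True
    then have "rch (insert {x,y} F - {{x,y}}) s t" using c by (simp add: cyc_def)
    then have "rch F s t" by (rule rch_mono[rotated]) auto
    then have "rch F x y" using True by (auto simp: doubleton_eq_iff intro: rch_sym)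
    then show False using assms(3) by simp
  next
    case False
    then have st: "{s,t} \<in> F" "s \<noteq> t" using c by (auto simp: cyc_def)
    have "insert {x,y} F - {{s,t}} = insert {x,y} (F - {{s,t}})" using False by auto
    then have "rch (insert {x,y} (F - {{s,t}})) s t" using c by (simp add: cyc_def)
    then have "rch (F - {{s,t}}) s t \<or> (rch (F - {{s,t}}) s x \<and> rch (F - {{s,t}}) y t)
       \<or> (rch (F - {{s,t}}) s y \<and> rch (F - {{s,t}}) x t)" by (rule rch_insert)
    moreover have "rch F x s \<or> rch F y s" using rch_insert[OF r] by auto
    moreover have "rch F s t" using st by (simp add: rch_edge)
    ultimately show False using assms st unfolding acyc_def cyc_def
      by (meson Diff_subset rch_mono rch_sym rch_trans)
  qed
qed

lemma far:
  assumes "acyc F z" "\<not> rch F z x" "\<not> rch F z y"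
  shows "acyc (insert {x,y} F) z"
  unfolding acyc_def
proof (intro allI impI notI)
  fix s t assume r: "rch (insert {x,y} F) z s" and c: "cyc (insert {x,y} F) s t"
  have rs: "rch F z s" using rch_insert[OF r] assms by auto
  show False
  proof (cases "{s,t} = {x,y}")
    case True
    then show False using rs assms by (auto simp: doubleton_eq_iff)
  next
    case False
    then have st: "{s,t} \<in> F" "s \<noteq> t" using c by (auto simp: cyc_def)
    have "insert {x,y} F - {{s,t}} = insert {x,y} (F - {{s,t}})" using False by auto
    then have "rch (insert {x,y} (F - {{s,t}})) s t" using c by (simp add: cyc_def)
    then have "rch (F - {{s,t}}) s t \<or> (rch (F - {{s,t}}) s x \<and> rch (F - {{s,t}}) y t)
       \<or> (rch (F - {{s,t}}) s y \<and> rch (F - {{s,t}}) x t)" by (rule rch_insert)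
    then show False using assms st rs unfolding acyc_def cyc_def
      by (meson Diff_subset rch_mono rch_trans)
  qed
qed



lemma tree_aux:
  assumes n1: "\<not> rch (F - {{s,t}}) s t" and n2: "\<not> rch (F - {{p,q}}) p q"
    and e1: "{s,t} \<in> F" and e2: "{p,q} \<in> F" and ne: "{s,t} \<noteq> {p,q}"
    and h1: "rch (F - {{s,t}}) s x" and h2: "rch (F - {{s,t}}) y t"
    and h3: "rch (F - {{s,t}} - {{p,q}}) p x" and h4: "rch (F - {{s,t}} - {{p,q}}) y q"
  shows False
proof -
  define F0 where "F0 = F - {{s,t}} - {{p,q}}"
  have i1: "F - {{s,t}} = insert {p,q} F0" using e2 ne unfolding F0_def by auto
  have i2: "F - {{p,q}} = insert {s,t} F0" using e1 ne unfolding F0_def by auto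
  have m1: "rch F0 u v \<Longrightarrow> rch (F - {{s,t}}) u v" for u v using i1 by (metis rch_mono subset_insertI)
  have m2: "rch F0 u v \<Longrightarrow> rch (F - {{p,q}}) u v" for u v using i2 by (metis rch_mono subset_insertI)
  have ed1: "rch (F - {{s,t}}) p q" using i1 by (simp add: rch_edge)
  have ed2: "rch (F - {{p,q}}) s t" using i2 by (simp add: rch_edge)
  have h3': "rch F0 p x" and h4': "rch F0 y q" using h3 h4 F0_def by auto
  have A: "rch F0 s x \<or> (rch F0 s p \<and> rch F0 q x) \<or> (rch F0 s q \<and> rch F0 p x)"
    using rch_insert[of p q F0 s x] h1 i1 by simp
  have B: "rch F0 y t \<or> (rch F0 y p \<and> rch F0 q t) \<or> (rch F0 y q \<and> rch F0 p t)"
    using rch_insert[of p q F0 y t] h2 i1 by simp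
  show False
    using A B h3' h4' n1 n2 m1 m2 ed1 ed2
    by (meson rch_sym rch_trans)
qed

lemma add_e1:
  assumes PF: "PF F" and ac: "acyc F x" and xy: "x \<noteq> y" "{x,y} \<notin> F"
    and c1: "cyc (insert {x,y} F) s t" and c2: "cyc (insert {x,y} F - {{s,t}}) p q"
    and r: "rch (insert {x,y} F) s p" and st: "{s,t} = {x,y}"
  shows False
proof -
  have eq: "insert {x,y} F - {{s,t}} = F" using st xy by auto
  have "cyc F p q" using c2 eq by simp
  have "rch F s t" using c1 eq by (simp add: cyc_def)
  then have rxy: "rch F x y" using st by (auto simp: doubleton_eq_iff intro: rch_sym)
  have "rch F s p" using rch_repl[OF rxy r] .
  moreover have "rch F x s" using st rxy by (auto simp: doubleton_eq_iff)
  ultimately show False using ac \<open>cyc F p q\<close> unfolding acyc_def by (meson rch_trans)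
qed

lemma add_aux:
  assumes PF: "PF F" and ac: "acyc F x" and xy: "x \<noteq> y" "{x,y} \<notin> F"
    and c1: "cyc (insert {x,y} F) s t" and c2: "cyc (insert {x,y} F - {{s,t}}) p q"
    and r: "rch (insert {x,y} F) s p" and st: "{s,t} \<noteq> {x,y}" and pq: "{p,q} \<noteq> {x,y}"
  shows False
proof -
  have e1: "{s,t} \<in> F" "s \<noteq> t" using c1 st by (auto simp: cyc_def)
  have e2: "{p,q} \<in> F" "p \<noteq> q" "{p,q} \<noteq> {s,t}" using c2 pq by (auto simp: cyc_def)
  have i1: "insert {x,y} F - {{s,t}} = insert {x,y} (F - {{s,t}})" using st by auto
  have i2: "insert {x,y} F - {{s,t}} - {{p,q}} = insert {x,y} (F - {{s,t}} - {{p,q}})" using st pq by auto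
  have R1: "rch (insert {x,y} (F - {{s,t}})) s t" using c1 i1 by (simp add: cyc_def)
  have R2: "rch (insert {x,y} (F - {{s,t}} - {{p,q}})) p q" using c2 i2 by (simp add: cyc_def)
  have ac': "\<not> (rch F x u \<and> cyc F u v)" for u v using ac unfolding acyc_def by blast
  have mF: "rch (F - A) u v \<Longrightarrow> rch F u v" for A u v by (meson Diff_subset rch_mono)
  have mF2: "rch (F - A - B) u v \<Longrightarrow> rch F u v" for A B u v by (meson Diff_subset rch_mono)
  have est: "rch F s t" "rch F t s" using e1 by (auto simp: rch_edge insert_commute)
  have epq: "rch F p q" "rch F q p" using e2 by (auto simp: rch_edge insert_commute)
  show False
  proof (cases "rch F x y")
    case False
    have cst: "cyc F s t"
      using rch_insert[OF R1] e1 False mF est unfolding cyc_def by (meson rch_sym rch_trans)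
    have "rch (F - {{s,t}} - {{p,q}}) p q"
      using rch_insert[OF R2] e2 False mF2 epq by (meson rch_sym rch_trans)
    then have cpq: "cyc (F - {{s,t}}) p q" using e2 unfolding cyc_def by auto
    then have cpq': "cyc F p q" using cyc_swap[OF cst] by blast
    show False using rch_insert[OF r] PF cst cpq cpq' ac' unfolding PF_def
      by (meson rch_sym rch_trans)
  next
    case True
    have rsp: "rch F s p" using rch_repl[OF True r] .
    show False
    proof (cases "cyc F s t")
      case True
      show False
      proof (cases "rch (F - {{s,t}} - {{p,q}}) p q")
        case True
        then have "cyc (F - {{s,t}}) p q" using e2 unfolding cyc_def by auto
        then show False using PF \<open>cyc F s t\<close> rsp unfolding PF_def by blast
      next
        case False
        then have "rch F x p" using rch_insert[OF R2] mF2 epq \<open>rch F x y\<close>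
          by (meson rch_sym rch_trans)
        then show False using ac' \<open>cyc F s t\<close> rsp by (meson rch_sym rch_trans)
      qed
    next
      case False
      then have n1: "\<not> rch (F - {{s,t}}) s t" using e1 by (simp add: cyc_def)
      then have xs: "(rch (F - {{s,t}}) s x \<and> rch (F - {{s,t}}) y t) \<or>
          (rch (F - {{s,t}}) s y \<and> rch (F - {{s,t}}) x t)" using rch_insert[OF R1] by blast
      have "rch F x s" using xs mF \<open>rch F x y\<close> by (meson rch_sym rch_trans)
      then have n2: "\<not> rch (F - {{p,q}}) p q" using ac' e2 rsp unfolding cyc_def by (meson rch_trans)
      then have "\<not> rch (F - {{s,t}} - {{p,q}}) p q" by (meson Diff_mono Diff_subset order_refl rch_mono)
      then have xp: "(rch (F - {{s,t}} - {{p,q}}) p x \<and> rch (F - {{s,t}} - {{p,q}}) y q) \<or>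
          (rch (F - {{s,t}} - {{p,q}}) p y \<and> rch (F - {{s,t}} - {{p,q}}) x q)" using rch_insert[OF R2] by blast
      have n1': "\<not> rch (F - {{t,s}}) t s" using n1 by (auto simp: insert_commute intro: rch_sym)
      have n2': "\<not> rch (F - {{q,p}}) q p" using n2 by (auto simp: insert_commute intro: rch_sym)
      have c3: "{t,s} \<in> F" "{q,p} \<in> F" "{t,s} = {s,t}" "{q,p} = {p,q}" using e1 e2 by (auto simp: insert_commute)
      from xs xp show False
      proof (elim disjE conjE)
        assume "rch (F - {{s,t}}) s x" "rch (F - {{s,t}}) y t"
          "rch (F - {{s,t}} - {{p,q}}) p x" "rch (F - {{s,t}} - {{p,q}}) y q"
        then show False using tree_aux[OF n1 n2 e1(1) e2(1)] e2(3) by metis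
      next
        assume "rch (F - {{s,t}}) s y" "rch (F - {{s,t}}) x t"
          "rch (F - {{s,t}} - {{p,q}}) p y" "rch (F - {{s,t}} - {{p,q}}) x q"
        then show False using tree_aux[OF n1 n2 e1(1) e2(1), of y x] e2(3) by metis
      next
        assume a: "rch (F - {{s,t}}) s x" "rch (F - {{s,t}}) y t"
          "rch (F - {{s,t}} - {{p,q}}) p y" "rch (F - {{s,t}} - {{p,q}}) x q"
        show False using tree_aux[OF n1 n2' e1(1) c3(2), of x y] a c3 e2(3)
          by (metis rch_sym)
      next
        assume a: "rch (F - {{s,t}}) s y" "rch (F - {{s,t}}) x t"
          "rch (F - {{s,t}} - {{p,q}}) p x" "rch (F - {{s,t}} - {{p,q}}) y q"
        show False using tree_aux[OF n1' n2 c3(1) e2(1), of x y] a c3 e2(3)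
          by (metis rch_sym)
      qed
    qed
  qed
qed

lemma PF_add:
  assumes PF: "PF F" and ac: "acyc F x" and xy: "x \<noteq> y" "{x,y} \<notin> F"
  shows "PF (insert {x,y} F)"
  unfolding PF_def
proof (intro allI impI notI)
  fix s t p q
  assume c1: "cyc (insert {x,y} F) s t" and c2: "cyc (insert {x,y} F - {{s,t}}) p q"
    and r: "rch (insert {x,y} F) s p"
  show False
  proof (cases "{s,t} = {x,y}")
    case True then show False using add_e1[OF assms c1 c2 r] by blast
  next
    case F1: False
    show False
    proof (cases "{p,q} = {x,y}")
      case True
      have "cyc (insert {x,y} F) p q \<and> cyc (insert {x,y} F - {{p,q}}) s t" by (rule cyc_swap[OF c1 c2])
      then show False using add_e1[OF assms, of p q s t] True r by (auto intro: rch_sym)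
    next
      case False then show False using add_aux[OF assms c1 c2 r F1] by blast
    qed
  qed
qed



lemma core:
  assumes PF: "PF E" and ccd: "cyc E c d" and ab: "{a,b} \<in> E" "a \<noteq> b"
    and dis: "a \<noteq> c" "a \<noteq> d" "b \<noteq> c" "b \<noteq> d"
    and nac: "{a,c} \<notin> E" and nbd: "{b,d} \<notin> E"
    and wl: "cyc E a b \<or> \<not> rch E a c \<or> rch (E - {{a,b}}) a c"
  shows "PF (insert {b,d} (insert {a,c} (E - {{c,d}} - {{a,b}})))"
proof -
  define F1 where "F1 = E - {{c,d}}"
  define F2 where "F2 = F1 - {{a,b}}"
  define F3 where "F3 = insert {a,c} F2"
  have cd: "{c,d} \<in> E" "c \<noteq> d" "rch F1 c d" using ccd by (auto simp: cyc_def F1_def)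
  have abcd: "{a,b} \<noteq> {c,d}" using dis by (auto simp: doubleton_eq_iff)
  have abF1: "{a,b} \<in> F1" using ab abcd by (auto simp: F1_def)
  have F1i: "F1 = insert {a,b} F2" using abF1 by (auto simp: F2_def)
  have sub1: "F2 \<subseteq> F1" "F1 \<subseteq> E" "F2 \<subseteq> E - {{a,b}}" "F2 \<subseteq> F3" by (auto simp: F1_def F2_def F3_def)
  have Ei: "E - {{a,b}} = insert {c,d} F2" using cd abcd by (auto simp: F1_def F2_def)
  have PF1: "PF F1" unfolding F1_def by (rule PF_del[OF PF])
  have PF2: "PF F2" unfolding F2_def by (rule PF_del[OF PF1])
  have acF1c: "acyc F1 c" unfolding F1_def by (rule PF_acyc[OF PF ccd])
  have dc: "{d,c} = {c,d}" and ca: "{c,a} = {a,c}" and ba: "{b,a} = {a,b}" and db: "{d,b} = {b,d}"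
    by auto
  have acF1d: "acyc F1 d" using PF_acyc[OF PF cyc_sym[OF ccd]] unfolding dc F1_def .
  have acF2c: "acyc F2 c" by (rule acyc_mono[OF sub1(1) acF1c])
  have acF2d: "acyc F2 d" by (rule acyc_mono[OF sub1(1) acF1d])
  have "{c,a} \<notin> F2" unfolding ca using nac sub1 by blast
  then have PF3: "PF F3" using PF_add[OF PF2 acF2c, of a] dis
    unfolding F3_def ca by blast
  have m21: "rch F2 u v \<Longrightarrow> rch F1 u v" for u v by (rule rch_mono[OF sub1(1)])
  have m1E: "rch F1 u v \<Longrightarrow> rch E u v" for u v by (rule rch_mono[OF sub1(2)])
  have m2E: "rch F2 u v \<Longrightarrow> rch E u v" for u v using m21 m1E by blast
  have mE: "rch F2 u v \<Longrightarrow> rch (E - {{a,b}}) u v" for u v by (rule rch_mono[OF sub1(3)])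
  have m23: "rch F2 u v \<Longrightarrow> rch F3 u v" for u v by (rule rch_mono[OF sub1(4)])
  have bdF3: "{b,d} \<notin> F3" using nbd dis ab(2) sub1 by (auto simp: F3_def doubleton_eq_iff)
  have acF3: "acyc F3 b \<or> acyc F3 d"
  proof (cases "cyc E a b")
    case True
    have acF2a: "acyc F2 a" by (rule acyc_mono[OF sub1(3) PF_acyc[OF PF True]])
    have acF2b: "acyc F2 b" by (rule acyc_mono[OF sub1(3) PF_acyc[OF PF cyc_sym[OF True], unfolded ba]])
    show ?thesis
    proof (cases "rch F2 a c")
      case False
      have j: "acyc F3 a" unfolding F3_def using join[OF acF2a acF2c False] .
      have rac: "rch F3 a c" by (simp add: F3_def rch_edge)
      show ?thesis
      proof (cases "rch F2 b a \<or> rch F2 b c")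
        case True
        then have "rch F3 a b" using rac m23 by (meson rch_sym rch_trans)
        then show ?thesis using acyc_rch[OF j] by blast
      next
        case False
        then have "acyc (insert {a,c} F2) b" using far[OF acF2b] by blast
        then show ?thesis unfolding F3_def ..
      qed
    next
      case True
      show ?thesis
      proof (cases "rch F2 b a")
        case False
        then have "\<not> rch F2 b c" using True by (meson rch_sym rch_trans)
        then have "acyc (insert {a,c} F2) b" using far[OF acF2b False] by blast
        then show ?thesis unfolding F3_def ..
      next
        case rba: True
        have "cyc F1 a b" unfolding cyc_def using abF1 ab rba F2_def by (auto intro: rch_sym)
        moreover have "rch F1 c a" using True m21 by (meson rch_sym)
        ultimately show ?thesis using acF1c unfolding acyc_def by blast
      qed
    qed
  next
    case ncab: False
    have nab: "\<not> rch (E - {{a,b}}) a b" using ncab ab by (simp add: cyc_def)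
    have F2cd: "rch F2 c d"
    proof -
      have "rch (E - {{a,b}}) c d" using Ei by (simp add: rch_edge)
      have "rch F2 c d \<or> (rch F2 c a \<and> rch F2 b d) \<or> (rch F2 c b \<and> rch F2 a d)"
        using rch_insert[of a b F2 c d] cd F1i by simp
      then show ?thesis using nab \<open>rch (E - {{a,b}}) c d\<close> mE by (meson rch_sym rch_trans)
    qed
    show ?thesis
    proof (cases "rch E a c")
      case False
      have nF2ac: "\<not> rch F2 a c" using False m2E by blast
      have "acyc F2 a \<or> acyc F2 b"
      proof (rule ccontr)
        assume "\<not> (acyc F2 a \<or> acyc F2 b)"
        then obtain s t p q where st: "rch F2 a s" "cyc F2 s t" and pq: "rch F2 b p" "cyc F2 p q"
          unfolding acyc_def by blast
        have rst: "rch F2 s t" and rpq: "rch F2 p q" using st(2) pq(2) unfolding cyc_def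
          by (simp_all add: rch_edge)
        have ne: "{p,q} \<noteq> {s,t}"
        proof
          assume "{p,q} = {s,t}"
          then have "p = s \<or> p = t" by (auto simp: doubleton_eq_iff)
          then have "rch F2 a b" using st(1) pq(1) rst by (meson rch_sym rch_trans)
          then show False using nab mE by blast
        qed
        have cE: "cyc E s t" using cyc_mono[OF _ st(2)] sub1 by blast
        have stF2: "{s,t} \<in> F2 - {{p,q}}" using st(2) ne by (auto simp: cyc_def)
        have r0: "rch (F2 - {{p,q}}) p q" using pq(2) by (simp add: cyc_def)
        have "F2 - {{p,q}} = insert {s,t} (F2 - {{p,q}} - {{s,t}})" using stF2 by auto
        then have "rch (F2 - {{p,q}} - {{s,t}}) p q \<or> (rch F2 p s) \<or> (rch F2 p t)"
          using rch_insert[of s t "F2 - {{p,q}} - {{s,t}}" p q] r0 rch_mono[of "F2 - {{p,q}} - {{s,t}}" F2]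
          by auto
        moreover have "\<not> rch F2 p s" "\<not> rch F2 p t"
          using st(1) pq(1) rst nab mE by (meson rch_sym rch_trans)+
        ultimately have "rch (F2 - {{p,q}} - {{s,t}}) p q" by blast
        then have "rch (E - {{s,t}} - {{p,q}}) p q" by (rule rch_mono[rotated]) (use sub1 in auto)
        then have cE2: "cyc (E - {{s,t}}) p q" using pq(2) ne sub1 unfolding cyc_def by auto
        have "rch E s p" using st(1) pq(1) rch_edge[OF ab(1)] m2E
          by (meson rch_sym rch_trans)
        then show False using PF cE cE2 unfolding PF_def by blast
      qed
      then show ?thesis
      proof
        assume a2: "acyc F2 a"
        have "acyc F3 a" unfolding F3_def by (rule join[OF a2 acF2c nF2ac])
        moreover have "rch F3 a d"
        proof -
          have rac3: "rch F3 a c" by (simp add: F3_def rch_edge)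
          show ?thesis by (rule rch_trans[OF rac3 m23[OF F2cd]])
        qed
        ultimately have "acyc F3 d" by (rule acyc_rch)
        then show ?thesis ..
      next
        assume b2: "acyc F2 b"
        have "\<not> rch F2 b a" using nab mE by (meson rch_sym)
        moreover have "\<not> rch F2 b c" using False rch_edge[OF ab(1)] m2E
          by (meson rch_trans)
        ultimately have "acyc (insert {a,c} F2) b" by (rule far[OF b2])
        then show ?thesis unfolding F3_def ..
      qed
    next
      case True
      with wl ncab have rac: "rch (E - {{a,b}}) a c" by blast
      have "rch F2 a c \<or> rch F2 a d"
        using rch_insert[OF rac[unfolded Ei]] by blast
      then have F2ac: "rch F2 a c" using F2cd by (meson rch_sym rch_trans)
      have "rch F1 c b" using m21[OF F2ac] rch_edge[OF abF1] by (meson rch_sym rch_trans)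
      then have "acyc F1 b" by (rule acyc_rch[OF acF1c])
      then have b2: "acyc F2 b" by (rule acyc_mono[OF sub1(1)])
      have "\<not> rch F2 b a" using nab mE by (meson rch_sym)
      moreover have "\<not> rch F2 b c" using calculation F2ac by (meson rch_sym rch_trans)
      ultimately have "acyc (insert {a,c} F2) b" by (rule far[OF b2])
        then show ?thesis unfolding F3_def ..
    qed
  qed
  have "PF (insert {b,d} F3)"
  proof (cases "acyc F3 b")
    case True then show ?thesis using PF_add[OF PF3 True] dis bdF3 by blast
  next
    case False
    then have "acyc F3 d" using acF3 by blast
    moreover have "{d,b} \<notin> F3" using bdF3 db by simp
    ultimately show ?thesis using PF_add[OF PF3, of d b] dis unfolding db by blast
  qed
  then show ?thesis by (simp add: F3_def F2_def F1_def)
qed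

lemma core2:
  assumes PF: "PF E" and ccd: "cyc E c d" and ab: "{a,b} \<in> E" "a \<noteq> b"
    and dis: "a \<noteq> c" "a \<noteq> d" "b \<noteq> c" "b \<noteq> d"
    and nac: "{a,c} \<notin> E" and nbd: "{b,d} \<notin> E"
  shows "PF (insert {b,d} (insert {a,c} (E - {{c,d}} - {{a,b}})))"
proof (cases "cyc E a b \<or> \<not> rch E a c \<or> rch (E - {{a,b}}) a c")
  case True then show ?thesis using core[OF assms] by blast
next
  case False
  then have n: "rch (E - {{a,b}}) b c" using rch_insert[of a b "E - {{a,b}}" a c] ab
    by (metis insert_Diff)
  have cdE: "{c,d} \<in> E - {{a,b}}" using ccd dis by (auto simp: cyc_def doubleton_eq_iff)
  have dc: "{d,c} = {c,d}" and ba: "{b,a} = {a,b}"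
    by auto
  have "rch (E - {{a,b}}) b d" using rch_trans[OF n rch_edge[OF cdE]] .
  then have wl: "cyc E b a \<or> \<not> rch E b d \<or> rch (E - {{b,a}}) b d" unfolding ba by blast
  have ab': "{b,a} \<in> E" using ab(1) unfolding ba .
  have "PF (insert {a,c} (insert {b,d} (E - {{d,c}} - {{b,a}})))"
    by (rule core[OF PF cyc_sym[OF ccd] ab' ab(2)[symmetric] dis(4) dis(3) dis(2) dis(1) nbd nac wl])
  moreover have "insert {a,c} (insert {b,d} (E - {{d,c}} - {{b,a}})) = insert {b,d} (insert {a,c} (E - {{c,d}} - {{a,b}}))"
    unfolding dc ba by (rule insert_commute)
  ultimately show ?thesis by simp
qed



lemma mod_ne:
  assumes "i < (n::nat)" "0 < m" "m < n"
  shows "(i + m) mod n \<noteq> i"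
proof (cases "i + m < n")
  case True then show ?thesis using assms by simp
next
  case False
  then have "(i + m) mod n = (i + m - n) mod n" by (simp add: le_mod_geq)
  also have "\<dots> = i + m - n" using assms by simp
  finally have "(i + m) mod n = i + m - n" .
  then show ?thesis using assms False by linarith
qed

lemma cyc_len: "is_cycle G vs \<Longrightarrow> length vs \<ge> 3" by (simp add: is_cycle_def)

lemma nth_inj: "distinct vs \<Longrightarrow> i < length vs \<Longrightarrow> j < length vs \<Longrightarrow> vs ! i = vs ! j \<Longrightarrow> i = j"
  by (simp add: nth_eq_iff_index_eq)

lemma ce_mem: "j < length vs \<Longrightarrow> {vs ! j, vs ! ((j + 1) mod length vs)} \<in> cycle_edges vs"
  unfolding cycle_edges_def by blast

lemma cycle_walk:
  assumes cy: "is_cycle G vs" and i: "i < length vs"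
  shows "k < length vs \<Longrightarrow> rch (cycle_edges vs - {{vs!i, vs!((i+1) mod length vs)}})
           (vs!((i+1) mod length vs)) (vs!((i+1+k) mod length vs))"
proof (induction k)
  case 0 then show ?case by simp
next
  case (Suc k)
  define n where "n = length vs"
  have n3: "n \<ge> 3" using cy by (simp add: is_cycle_def n_def)
  have dist: "distinct vs" using cy by (simp add: is_cycle_def)
  have k: "Suc k < n" using Suc.prems n_def by simp
  define j where "j = (i+1+k) mod n"
  have jn: "j < n" using n3 by (simp add: j_def)
  have j': "(j + 1) mod n = (i+1+Suc k) mod n" unfolding j_def by (simp add: mod_Suc_eq)
  have e: "{vs!j, vs!((i+1+Suc k) mod n)} \<in> cycle_edges vs"
    using ce_mem[of j vs] jn j' n_def by simp
  have i1: "(i+1) mod n < n" using n3 by simp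
  have ne: "{vs!j, vs!((i+1+Suc k) mod n)} \<noteq> {vs!i, vs!((i+1) mod n)}"
  proof
    assume "{vs!j, vs!((i+1+Suc k) mod n)} = {vs!i, vs!((i+1) mod n)}"
    then have "(vs!j = vs!i \<and> vs!((i+1+Suc k) mod n) = vs!((i+1) mod n)) \<or>
               (vs!j = vs!((i+1) mod n) \<and> vs!((i+1+Suc k) mod n) = vs!i)"
      by (auto simp: doubleton_eq_iff)
    moreover have "(i+1+Suc k) mod n < n" using n3 by simp
    ultimately have "j = i \<or> (j = (i+1) mod n \<and> (i+1+Suc k) mod n = i)"
      using nth_inj[OF dist] jn i i1 n_def by metis
    then show False
    proof
      assume "j = i"
      then have "(i + Suc k) mod n = i" by (simp add: j_def)
      then show False using mod_ne[of i n "Suc k"] i k n_def by simp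
    next
      assume a: "j = (i+1) mod n \<and> (i+1+Suc k) mod n = i"
      have "k = 0"
      proof (rule ccontr)
        assume "k \<noteq> 0"
        have "((i+1) mod n + k) mod n = j" by (simp add: j_def mod_add_left_eq)
        then show False using mod_ne[OF i1, of k] a \<open>k \<noteq> 0\<close> k by simp
      qed
      then have "(i + 2) mod n = i" using a by simp
      then show False using mod_ne[of i n 2] i n3 n_def by simp
    qed
  qed
  have "rch (cycle_edges vs - {{vs!i, vs!((i+1) mod n)}}) (vs!j) (vs!((i+1+Suc k) mod n))"
    using e ne by (intro rch_edge) simp
  then show ?case using Suc.IH Suc.prems unfolding n_def j_def
    by (meson Suc_lessD rch_trans)
qed

lemma cycle_back:
  assumes cy: "is_cycle G vs" and i: "i < length vs"
  shows "rch (cycle_edges vs - {{vs!i, vs!((i+1) mod length vs)}})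
           (vs!((i+1) mod length vs)) (vs!i)"
proof -
  have n: "length vs \<ge> 3" using cy by (simp add: is_cycle_def)
  have "i + 1 + (length vs - 1) = i + length vs" using n by simp
  then have "(i + 1 + (length vs - 1)) mod length vs = i" using i by simp
  then show ?thesis using cycle_walk[OF cy i, of "length vs - 1"] n by simp
qed

lemma cycle_conn:
  assumes cy: "is_cycle G vs" and x: "x \<in> set vs" and y: "y \<in> set vs"
  shows "rch (cycle_edges vs) x y"
proof -
  define n where "n = length vs"
  have n: "n \<ge> 3" using cy by (simp add: is_cycle_def n_def)
  have i: "n - 1 < length vs" using n n_def by simp
  have a: "rch (cycle_edges vs) (vs!0) (vs!k)" if "k < n" for k
  proof -
    have "(n - 1 + 1 + k) mod n = k" using that n by simp
    moreover have "(n - 1 + 1) mod n = 0" using n by simp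
    ultimately show ?thesis using cycle_walk[OF cy i, of k] that n_def
      by (metis Diff_subset rch_mono)
  qed
  obtain k1 k2 where "k1 < n" "k2 < n" "x = vs!k1" "y = vs!k2" using x y n_def by (metis in_set_conv_nth)
  then show ?thesis using a by (meson rch_sym rch_trans)
qed

lemma ce_sub: "is_cycle G vs \<Longrightarrow> cycle_edges vs \<subseteq> edges G"
  unfolding is_cycle_def cycle_edges_def adj_def by auto

lemma ce_setD: "e \<in> cycle_edges vs \<Longrightarrow> x \<in> e \<Longrightarrow> length vs > 0 \<Longrightarrow> x \<in> set vs"
  unfolding cycle_edges_def by auto

lemma set_ce: "x \<in> set vs \<Longrightarrow> \<exists>e\<in>cycle_edges vs. x \<in> e"
  by (metis ce_mem in_set_conv_nth insertI1)

lemma cyc_of_cycle: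
  assumes cy: "is_cycle G vs" and f: "f \<in> cycle_edges vs" and sub: "cycle_edges vs \<subseteq> F"
  shows "\<exists>x y. f = {x,y} \<and> cyc F x y \<and> x \<in> set vs \<and> y \<in> set vs"
proof -
  obtain i where i: "i < length vs" and fi: "f = {vs!i, vs!((i+1) mod length vs)}"
    using f unfolding cycle_edges_def by blast
  have n: "length vs \<ge> 3" and dist: "distinct vs" using cy by (auto simp: is_cycle_def)
  have ne: "vs!i \<noteq> vs!((i+1) mod length vs)"
  proof
    assume "vs!i = vs!((i+1) mod length vs)"
    moreover have "(i+1) mod length vs < length vs" using n by (intro mod_less_divisor) linarith
    ultimately have "i = (i+1) mod length vs" using nth_inj[OF dist i] by blast
    then show False using mod_ne[OF i, of 1] n by simp
  qed
  have "rch (F - {f}) (vs!((i+1) mod length vs)) (vs!i)"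
    using cycle_back[OF cy i] fi sub by (meson Diff_mono order_refl rch_mono)
  then have "rch (F - {f}) (vs!i) (vs!((i+1) mod length vs))" by (rule rch_sym)
  moreover have "f \<in> F" using f sub by blast
  ultimately have "cyc F (vs!i) (vs!((i+1) mod length vs))" using ne fi by (simp add: cyc_def)
  moreover have "vs!i \<in> set vs" "vs!((i+1) mod length vs) \<in> set vs" using i n by (auto intro!: nth_mem mod_less_divisor)
  ultimately show ?thesis using fi by blast
qed



lemma path_last: "rtrancl_path r x xs y \<Longrightarrow> (if xs = [] then x = y else last xs = y)"
  by (induction rule: rtrancl_path.induct) (auto elim: rtrancl_path.cases)

lemma path_step: "rtrancl_path r x xs y \<Longrightarrow> i < length xs \<Longrightarrow> r ((x#xs)!i) ((x#xs)!Suc i)"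
proof (induction arbitrary: i rule: rtrancl_path.induct)
  case (base x) then show ?case by simp
next
  case (step x y ys z)
  then show ?case by (cases i) auto
qed

lemma adj_rch: "(adj G)\<^sup>*\<^sup>* = rch (edges G)"
  by (simp add: rch_def adj_def[abs_def])

lemma simple_edge_verts: "simple_graph G \<Longrightarrow> {x,y} \<in> edges G \<Longrightarrow> x \<in> verts G \<and> y \<in> verts G"
  unfolding simple_graph_def by blast

lemma cycle_of_cyc:
  assumes sg: "simple_graph G" and c: "cyc (edges G) u v"
  shows "\<exists>vs. is_cycle G vs \<and> {u,v} \<in> cycle_edges vs"
proof -
  let ?E = "edges G"
  let ?r = "\<lambda>x y. {x,y} \<in> ?E - {{u,v}}"
  have uv: "u \<noteq> v" "{u,v} \<in> ?E" and r0: "rch (?E - {{u,v}}) u v" using c by (auto simp: cyc_def)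
  have "rch (?E - {{u,v}}) v u" using r0 by (rule rch_sym)
  then have "?r\<^sup>*\<^sup>* v u" by (simp add: rch_def)
  then obtain xs0 where "rtrancl_path ?r v xs0 u" by (auto simp: rtranclp_eq_rtrancl_path)
  then obtain xs where p: "rtrancl_path ?r v xs u" and d: "distinct (v # xs)"
    by (rule rtrancl_path_distinct)
  define vs where "vs = v # xs"
  have xsne: "xs \<noteq> []" using path_last[OF p] uv by auto
  have lst: "last xs = u" using path_last[OF p] xsne by simp
  have st: "\<And>i. i < length xs \<Longrightarrow> ?r (vs!i) (vs!Suc i)" using path_step[OF p] vs_def by simp
  have len: "length xs \<ge> 2"
  proof (rule ccontr)
    assume "\<not> length xs \<ge> 2"
    then have "length xs = 1" using xsne by (cases xs) (auto simp: Suc_le_eq)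
    then obtain a where "xs = [a]" by (metis One_nat_def length_0_conv length_Suc_conv)
    then have "xs = [u]" using lst by simp
    then have "?r v u" using st[of 0] vs_def by simp
    then show False by (simp add: insert_commute)
  qed
  have n: "length vs = Suc (length xs)" by (simp add: vs_def)
  have lastvs: "vs ! (length vs - 1) = u" using lst xsne n by (simp add: vs_def last_conv_nth)
  have adjs: "adj G (vs ! i) (vs ! ((i + 1) mod length vs))" if i: "i < length vs" for i
  proof (cases "i < length xs")
    case True
    then have "(i+1) mod length vs = Suc i" using n by simp
    then show ?thesis using st[OF True] by (simp add: adj_def)
  next
    case False
    then have "i = length vs - 1" using i n by simp
    moreover have "(length vs - 1 + 1) mod length vs = 0" using n by simp
    ultimately show ?thesis using lastvs uv by (simp add: adj_def vs_def)
  qed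
  have inV: "set vs \<subseteq> verts G"
  proof
    fix w assume "w \<in> set vs"
    then obtain i where i: "i < length vs" "w = vs ! i" by (metis in_set_conv_nth)
    show "w \<in> verts G"
      using adjs[OF i(1)] simple_edge_verts[OF sg] i(2) unfolding adj_def by blast
  qed
  have cy: "is_cycle G vs" unfolding is_cycle_def using len n d inV adjs vs_def by simp
  have "{vs ! (length vs - 1), vs ! ((length vs - 1 + 1) mod length vs)} \<in> cycle_edges vs"
    by (rule ce_mem) (simp add: n)
  moreover have "(length vs - 1 + 1) mod length vs = 0" using n by simp
  ultimately have "{u, v} \<in> cycle_edges vs" using lastvs by (simp add: vs_def)
  then show ?thesis using cy by blast
qed

lemma is_cycle_mono:
  "is_cycle G vs \<Longrightarrow> verts G \<subseteq> verts H \<Longrightarrow> edges G \<subseteq> edges H \<Longrightarrow> is_cycle H vs"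
  unfolding is_cycle_def adj_def by blast

lemma comp_verts: "verts (component G v) = {u. reachable G v u}"
  by (simp add: component_def induced_def verts_def)
lemma comp_edges: "edges (component G v) = {e \<in> edges G. e \<subseteq> {u. reachable G v u}}"
  by (simp add: component_def induced_def edges_def verts_def)

lemma reach_verts: "simple_graph G \<Longrightarrow> reachable G v u \<Longrightarrow> u \<in> verts G"
proof -
  assume sg: "simple_graph G" and r: "reachable G v u"
  have "(adj G)\<^sup>*\<^sup>* v u" "v \<in> verts G" using r by (auto simp: reachable_def)
  then show ?thesis
    by (induction rule: rtranclp_induct) (auto simp: adj_def dest: simple_edge_verts[OF sg])
qed

lemma comp_cycle:
  assumes "is_cycle G vs" "set vs \<subseteq> {u. reachable G v u}"
  shows "is_cycle (component G v) vs"
proof -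
  have "vs ! ((i+1) mod length vs) \<in> set vs" if "i < length vs" for i
    using that by (intro nth_mem mod_less_divisor) linarith
  then show ?thesis using assms unfolding is_cycle_def adj_def comp_verts comp_edges
    by (auto dest: nth_mem)
qed

lemma cycle_comp:
  assumes sg: "simple_graph G" and "is_cycle (component G v) vs"
  shows "is_cycle G vs \<and> set vs \<subseteq> {u. reachable G v u}"
  using assms(2) reach_verts[OF sg] unfolding is_cycle_def adj_def comp_verts comp_edges by auto

lemma tree_uni_eq:
  "is_tree C \<or> unicyclic C \<Longrightarrow> X \<in> cycles_of C \<Longrightarrow> Y \<in> cycles_of C \<Longrightarrow> X = Y"
  unfolding is_tree_def unicyclic_def by (auto simp: card_1_singleton_iff)

lemma comp_connected:
  assumes sg: "simple_graph G" and v: "v \<in> verts G"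
  shows "connected_graph (component G v)"
proof -
  let ?R = "{u. reachable G v u}"
  have key: "(adj (component G v))\<^sup>*\<^sup>* v w" if "(adj G)\<^sup>*\<^sup>* v w" for w
    using that
  proof (induction rule: rtranclp_induct)
    case base then show ?case by simp
  next
    case (step y z)
    have "reachable G v y" "reachable G v z" using step v by (auto simp: reachable_def)
    then have "adj (component G v) y z" using step(2) by (auto simp: adj_def comp_edges)
    then show ?case using step(3) by simp
  qed
  have sym: "(adj (component G v))\<^sup>*\<^sup>* x y \<Longrightarrow> (adj (component G v))\<^sup>*\<^sup>* y x" for x y
    using rch_sym[of "edges (component G v)" x y] by (simp add: adj_rch)
  show ?thesis unfolding connected_graph_def
  proof (intro conjI ballI)
    show "verts (component G v) \<noteq> {}" using v by (auto simp: comp_verts reachable_def)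
  next
    fix x y assume x: "x \<in> verts (component G v)" and y: "y \<in> verts (component G v)"
    have "(adj (component G v))\<^sup>*\<^sup>* v x" "(adj (component G v))\<^sup>*\<^sup>* v y"
      using x y key by (auto simp: comp_verts reachable_def)
    then show "reachable (component G v) x y" using x sym
      by (auto simp: reachable_def intro: rtranclp_trans)
  qed
qed

lemma all_eq_tree_uni:
  assumes "connected_graph C" "\<And>X Y. X \<in> cycles_of C \<Longrightarrow> Y \<in> cycles_of C \<Longrightarrow> X = Y"
  shows "is_tree C \<or> unicyclic C"
proof (cases "cycles_of C = {}")
  case True then show ?thesis using assms by (simp add: is_tree_def)
next
  case False
  then obtain X where "X \<in> cycles_of C" by blast
  then have "cycles_of C = {X}" using assms(2) by blast
  then show ?thesis using assms by (simp add: unicyclic_def)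
qed



lemma pf_comp_eq:
  assumes pf: "pseudoforest G" and v: "v \<in> verts G"
    and c1: "is_cycle G vs1" "set vs1 \<subseteq> {u. reachable G v u}"
    and c2: "is_cycle G vs2" "set vs2 \<subseteq> {u. reachable G v u}"
  shows "cycle_edges vs1 = cycle_edges vs2"
proof -
  have "is_tree (component G v) \<or> unicyclic (component G v)" using pf v by (simp add: pseudoforest_def)
  moreover have "cycle_edges vs1 \<in> cycles_of (component G v)" "cycle_edges vs2 \<in> cycles_of (component G v)"
    using comp_cycle[OF c1] comp_cycle[OF c2] unfolding cycles_of_def by blast+
  ultimately show ?thesis by (rule tree_uni_eq)
qed

lemma cycle_reach:
  assumes cy: "is_cycle G vs" and x: "x \<in> set vs" and r: "rch (edges G) v x" and v: "v \<in> verts G"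
  shows "set vs \<subseteq> {u. reachable G v u}"
proof
  fix w assume "w \<in> set vs"
  then have "rch (cycle_edges vs) x w" by (rule cycle_conn[OF cy x])
  then have "rch (edges G) x w" using ce_sub[OF cy] by (rule rch_mono[rotated])
  then show "w \<in> {u. reachable G v u}" using r v by (auto simp: reachable_def adj_rch intro: rch_trans)
qed

lemma pf_PF:
  assumes pf: "pseudoforest G"
  shows "PF (edges G)"
  unfolding PF_def
proof (intro allI impI notI)
  fix s t p q
  assume c1: "cyc (edges G) s t" and c2: "cyc (edges G - {{s,t}}) p q" and r: "rch (edges G) s p"
  have sg: "simple_graph G" using pf by (simp add: pseudoforest_def)
  obtain vs1 where v1: "is_cycle G vs1" "{s,t} \<in> cycle_edges vs1" using cycle_of_cyc[OF sg c1] by blast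
  define G2 where "G2 = (verts G, edges G - {{s,t}})"
  have sg2: "simple_graph G2" using sg unfolding G2_def simple_graph_def verts_def edges_def by auto
  have "cyc (edges G2) p q" using c2 by (simp add: G2_def edges_def)
  then obtain vs2 where v2: "is_cycle G2 vs2" "{p,q} \<in> cycle_edges vs2" using cycle_of_cyc[OF sg2] by blast
  have cy2: "is_cycle G vs2" using is_cycle_mono[OF v2(1)] by (simp add: G2_def verts_def edges_def)
  have nst: "{s,t} \<notin> cycle_edges vs2" using ce_sub[OF v2(1)] by (auto simp: G2_def edges_def)
  have sV: "s \<in> verts G" using simple_edge_verts[OF sg] c1 by (auto simp: cyc_def)
  have s1: "s \<in> set vs1" using v1 cyc_len[OF v1(1)] by (intro ce_setD[of "{s,t}"]) auto
  have p2: "p \<in> set vs2" using v2 cyc_len[OF v2(1)] by (intro ce_setD[of "{p,q}"]) auto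
  have "set vs1 \<subseteq> {u. reachable G s u}" using cycle_reach[OF v1(1) s1 _ sV] by simp
  moreover have "set vs2 \<subseteq> {u. reachable G s u}" using cycle_reach[OF cy2 p2 r sV] .
  ultimately have "cycle_edges vs1 = cycle_edges vs2" using pf_comp_eq[OF pf sV v1(1) _ cy2] by blast
  then show False using v1(2) nst by simp
qed

lemma PF_pf:
  assumes sg: "simple_graph H" and P: "PF (edges H)"
  shows "pseudoforest H"
  unfolding pseudoforest_def
proof (intro conjI ballI)
  show "simple_graph H" by fact
  fix v assume v: "v \<in> verts H"
  have half: "cycle_edges vs1 \<subseteq> cycle_edges vs2"
    if c1: "is_cycle H vs1" "set vs1 \<subseteq> {u. reachable H v u}"
    and c2: "is_cycle H vs2" "set vs2 \<subseteq> {u. reachable H v u}" for vs1 vs2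
  proof
    fix f assume f: "f \<in> cycle_edges vs1"
    show "f \<in> cycle_edges vs2"
    proof (rule ccontr)
      assume nf: "f \<notin> cycle_edges vs2"
      obtain s t where st: "f = {s,t}" "cyc (edges H) s t" "s \<in> set vs1"
        using cyc_of_cycle[OF c1(1) f ce_sub[OF c1(1)]] by blast
      have n2: "length vs2 \<ge> 3" by (rule cyc_len[OF c2(1)])
      have g: "{vs2 ! 0, vs2 ! ((0 + 1) mod length vs2)} \<in> cycle_edges vs2"
        by (rule ce_mem) (use n2 in linarith)
      have "cycle_edges vs2 \<subseteq> edges H - {f}" using ce_sub[OF c2(1)] nf by blast
      then obtain p q where pq: "cyc (edges H - {f}) p q" "p \<in> set vs2"
        using cyc_of_cycle[OF c2(1) g] by blast
      have "reachable H v s" "reachable H v p" using st(3) pq(2) c1(2) c2(2) by auto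
      then have "rch (edges H) s p" by (auto simp: reachable_def adj_rch intro: rch_sym rch_trans)
      then show False using P st pq unfolding PF_def by blast
    qed
  qed
  show "is_tree (component H v) \<or> unicyclic (component H v)"
  proof (rule all_eq_tree_uni[OF comp_connected[OF sg v]])
    fix X Y assume "X \<in> cycles_of (component H v)" "Y \<in> cycles_of (component H v)"
    then obtain vs1 vs2 where "X = cycle_edges vs1" "Y = cycle_edges vs2"
      "is_cycle (component H v) vs1" "is_cycle (component H v) vs2"
      unfolding cycles_of_def by blast
    then show "X = Y" using cycle_comp[OF sg] half by (metis subset_antisym)
  qed
qed



lemma cd_cyc:
  assumes pf: "pseudoforest G" and cd: "{c,d} \<in> edges (Cycles G)"
  shows "cyc (edges G) c d"
proof -
  have sg: "simple_graph G" using pf by (simp add: pseudoforest_def)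
  have cdE: "{c,d} \<in> edges G" and cin: "\<exists>vs. is_cycle G vs \<and> c \<in> set vs"
    and din: "\<exists>vs. is_cycle G vs \<and> d \<in> set vs"
    using cd by (auto simp: Cycles_def induced_def edges_def)
  obtain vs1 where v1: "is_cycle G vs1" "c \<in> set vs1" using cin by blast
  obtain vs2 where v2: "is_cycle G vs2" "d \<in> set vs2" using din by blast
  have cdne: "c \<noteq> d" using sg cdE unfolding simple_graph_def by fastforce
  have cV: "c \<in> verts G" using simple_edge_verts[OF sg cdE] by simp
  have r1: "set vs1 \<subseteq> {u. reachable G c u}" using cycle_reach[OF v1(1) v1(2) _ cV] by simp
  have r2: "set vs2 \<subseteq> {u. reachable G c u}" using cycle_reach[OF v2(1) v2(2) rch_edge[OF cdE] cV] .
  have eq: "cycle_edges vs1 = cycle_edges vs2" by (rule pf_comp_eq[OF pf cV v1(1) r1 v2(1) r2])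
  obtain e where "e \<in> cycle_edges vs2" "d \<in> e" using set_ce[OF v2(2)] by blast
  then have d1: "d \<in> set vs1" using eq cyc_len[OF v1(1)] by (intro ce_setD[of e]) auto
  show ?thesis
  proof (cases "{c,d} \<in> cycle_edges vs1")
    case True
    then obtain x y where "{c,d} = {x,y}" "cyc (edges G) x y"
      using cyc_of_cycle[OF v1(1) True ce_sub[OF v1(1)]] by blast
    then show ?thesis by (auto simp: doubleton_eq_iff intro: cyc_sym)
  next
    case False
    have "rch (cycle_edges vs1) c d" by (rule cycle_conn[OF v1(1) v1(2) d1])
    moreover have "cycle_edges vs1 \<subseteq> edges G - {{c,d}}" using ce_sub[OF v1(1)] False by blast
    ultimately have "rch (edges G - {{c,d}}) c d" by (rule rch_mono[rotated])
    then show ?thesis using cdne cdE by (simp add: cyc_def)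
  qed
qed

theorem lemma4p5:
  fixes G :: "'a graph" and a b c d :: 'a
  assumes "pseudoforest G"
    and "interchangeable G a b c d"
    and "({a, b} \<in> edges (Forest G) \<and> {c, d} \<in> edges (Cycles G)) \<or>
         ({a, b} \<in> edges (Cycles G) \<and> {c, d} \<in> edges (Cycles G))"
  shows "p_switch G a b c d"
proof -
  let ?E = "edges G"
  have sg: "simple_graph G" using assms(1) by (simp add: pseudoforest_def)
  have PF: "PF ?E" by (rule pf_PF[OF assms(1)])
  have ccd: "cyc ?E c d" using cd_cyc[OF assms(1)] assms(3) by blast
  have ab: "{a,b} \<in> ?E" and cd: "{c,d} \<in> ?E" and dis: "a \<noteq> c" "a \<noteq> d" "b \<noteq> c" "b \<noteq> d"
    and nac: "{a,c} \<notin> ?E" and nbd: "{b,d} \<notin> ?E"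
    using assms(2) by (auto simp: interchangeable_def)
  have anb: "a \<noteq> b" using sg ab unfolding simple_graph_def by fastforce
  have P': "PF (insert {b,d} (insert {a,c} (?E - {{c,d}} - {{a,b}})))"
    by (rule core2[OF PF ccd ab anb dis nac nbd])
  define H where "H = two_switch a b c d G"
  have Hv: "verts H = verts G" and He: "edges H = insert {b,d} (insert {a,c} (?E - {{c,d}} - {{a,b}}))"
    using assms(2) by (auto simp: H_def two_switch_def verts_def edges_def)
  have av: "a \<in> verts G" "b \<in> verts G" using simple_edge_verts[OF sg ab] by auto
  have cv: "c \<in> verts G" "d \<in> verts G" using simple_edge_verts[OF sg cd] by auto
  have sH: "simple_graph H"
    using sg unfolding simple_graph_def He Hv using av cv dis by auto
  have "pseudoforest H" by (rule PF_pf[OF sH]) (simp add: He P')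
  then show ?thesis using assms(1,2) by (simp add: p_switch_def H_def)
qed

end
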